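(* Consider the Markov chain on the state space $\{0,1,2,\dots\}$ with infinite transition probability matrix $\mathbf P=(P_{ij})$ given by: $P_{00}=5/6$, $P_{01}=1/6$; $P_{10}=5/6$, $P_{12}=1/6$; for every $i\ge 2$: $P_{i0}=2/3$, $P_{i,i-1}=1/6$, $P_{i,i+1}=1/6$; all other entries $0$. Then the steady state probability vector $\vec\pi=(\pi_0,\pi_1,\pi_2,\dots)$ (the probability vector with $\vec\pi=\vec\pi\mathbf P$) is given by $\pi_i=\beta^i-\beta^{i+1}$ for $i=0,1,2,\dots$, where $\beta=3-2\sqrt2$. *)

theory Defs
  imports Complex_Main
begin

definition P :: "nat \<Rightarrow> nat \<Rightarrow> real" where
  "P i j =
     (if i = 0 then (if j = 0 then 5/6 else if j = 1 then 1/6 else 0)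
      else if i = 1 then (if j = 0 then 5/6 else if j = 2 then 1/6 else 0)
      else (if j = 0 then 2/3 else if j = i - 1 then 1/6
            else if j = i + 1 then 1/6 else 0))"

definition stationary_prob_vector :: "(nat \<Rightarrow> nat \<Rightarrow> real) \<Rightarrow> (nat \<Rightarrow> real) \<Rightarrow> bool" where
  "stationary_prob_vector Q \<pi> \<longleftrightarrow>
     (\<forall>i. 0 \<le> \<pi> i) \<and> \<pi> sums 1 \<and>
     (\<forall>j. (\<lambda>i. \<pi> i * Q i j) sums \<pi> j)"

end

theory Submission
  imports Defs
begin

lemma P_col: "j \<ge> 1 \<Longrightarrow> P i j = (if i = j - 1 \<or> i = j + 1 then 1/6 else 0)"
  unfolding P_def by auto

lemma P_col0: "P i 0 = 2/3 + (if i = 0 \<or> i = 1 then 1/6 else 0)"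
  unfolding P_def by auto

lemma col_sums:
  assumes "j \<ge> 1"
  shows "(\<lambda>i. \<pi> i * P i j) sums (\<pi> (j-1)/6 + \<pi> (j+1)/6)"
proof -
  have "(\<lambda>i. \<pi> i * P i j) sums (\<Sum>i\<in>{j-1, j+1}. \<pi> i * P i j)"
    by (rule sums_finite) (auto simp: P_col[OF assms])
  moreover have "(\<Sum>i\<in>{j-1, j+1}. \<pi> i * P i j) = \<pi> (j-1)/6 + \<pi> (j+1)/6"
    using assms by (simp add: P_col)
  ultimately show ?thesis by simp
qed

lemma rec:
  assumes "stationary_prob_vector P \<pi>"
  shows "\<pi> (n+2) = 6 * \<pi> (n+1) - \<pi> n"
proof -
  have "(\<lambda>i. \<pi> i * P i (n+1)) sums \<pi> (n+1)"
    using assms unfolding stationary_prob_vector_def by blast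
  moreover have "(\<lambda>i. \<pi> i * P i (n+1)) sums (\<pi> n/6 + \<pi> (n+2)/6)"
    using col_sums[of "n+1" \<pi>] by simp
  ultimately have "\<pi> (n+1) = \<pi> n/6 + \<pi> (n+2)/6" using sums_unique2 by blast
  then show ?thesis by simp
qed

theorem theorem4p1:
  fixes \<beta> :: real
  assumes "\<beta> = 3 - 2 * sqrt 2"
  shows "\<forall>\<pi>. stationary_prob_vector P \<pi> \<longleftrightarrow> (\<forall>i. \<pi> i = \<beta> ^ i - \<beta> ^ (i + 1))"
proof -
  have s2: "sqrt 2 * sqrt 2 = (2::real)" by simp
  have s2a: "sqrt 2 > (1.4::real)"
    by (rule real_less_rsqrt) (simp add: power2_eq_square)
  have s2b: "sqrt 2 < (1.5::real)"
  proof -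
    have "sqrt 2 < sqrt ((1.5::real)^2)" by (rule real_sqrt_less_mono) (simp add: power2_eq_square)
    then show ?thesis by simp
  qed
  have b0: "\<beta> > 0" and b1: "\<beta> < 1" using assms s2a s2b by auto
  have bq: "\<beta> * \<beta> = 6 * \<beta> - 1" unfolding assms by (simp add: algebra_simps s2)
  define \<gamma> where "\<gamma> = 6 - \<beta>"
  have g1: "\<gamma> \<ge> 1" using b1 by (simp add: \<gamma>_def)
  have geo: "(\<lambda>n. \<beta> ^ n) sums (1 / (1 - \<beta>))"
    using geometric_sums[of \<beta>] b0 b1 by simp
  show ?thesis
  proof (rule allI, rule iffI)
    fix \<pi> :: "nat \<Rightarrow> real"
    assume st: "stationary_prob_vector P \<pi>"
    have s1: "\<pi> sums 1" using st unfolding stationary_prob_vector_def by blast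
    have lim: "\<pi> \<longlonglongrightarrow> 0" using s1 summable_LIMSEQ_zero sums_summable by blast
    define d where "d n = \<pi> (n+1) - \<beta> * \<pi> n" for n
    have dn: "d n = \<gamma> ^ n * d 0" for n
    proof (induction n)
      case (Suc n)
      have e1: "d (Suc n) = \<pi> (n+2) - \<beta> * \<pi> (n+1)" by (simp add: d_def)
      have e2: "\<gamma> * d n = 6 * \<pi> (n+1) - \<beta> * \<pi> (n+1) - 6 * (\<beta> * \<pi> n) + \<beta> * \<beta> * \<pi> n"
        unfolding d_def \<gamma>_def by algebra
      have e3: "\<beta> * \<beta> * \<pi> n = 6 * (\<beta> * \<pi> n) - \<pi> n" using bq by algebra
      have e4: "\<pi> (n+2) = 6 * \<pi> (n+1) - \<pi> n" by (rule rec[OF st])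
      have "d (Suc n) = \<gamma> * d n" using e1 e2 e3 e4 by linarith
      then show ?case using Suc by simp
    qed simp
    have dlim: "d \<longlonglongrightarrow> 0"
    proof -
      have "(\<lambda>n. \<pi> (Suc n) - \<beta> * \<pi> n) \<longlonglongrightarrow> 0 - \<beta> * 0"
        by (intro tendsto_intros lim[THEN LIMSEQ_Suc] lim)
      then show ?thesis unfolding d_def by simp
    qed
    have d0: "d 0 = 0"
    proof (rule ccontr)
      assume nz: "d 0 \<noteq> 0"
      have "\<forall>n. \<bar>d 0\<bar> \<le> \<bar>d n\<bar>"
      proof
        fix n
        have "1 \<le> \<gamma> ^ n" using g1 by (simp add: one_le_power)
        then have "1 * \<bar>d 0\<bar> \<le> \<gamma> ^ n * \<bar>d 0\<bar>" by (intro mult_right_mono) auto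
        then show "\<bar>d 0\<bar> \<le> \<bar>d n\<bar>" using g1 by (simp add: dn[of n] abs_mult)
      qed
      moreover have "eventually (\<lambda>n. \<bar>d n\<bar> < \<bar>d 0\<bar>) sequentially"
        using dlim nz unfolding tendsto_iff by (auto simp: dist_real_def)
      ultimately have "\<forall>\<^sub>F n in sequentially. False"
        by (metis (mono_tags, lifting) eventually_mono not_le)
      then show False by simp
    qed
    have pn: "\<pi> n = \<pi> 0 * \<beta> ^ n" for n
    proof (induction n)
      case (Suc n)
      have "d n = 0" using dn[of n] d0 by simp
      then show ?case using Suc unfolding d_def by simp
    qed simp
    have pe: "\<pi> = (\<lambda>n. \<pi> 0 * \<beta> ^ n)" by (rule ext) (rule pn)
    have "(\<lambda>n. \<pi> 0 * \<beta> ^ n) sums (\<pi> 0 * (1 / (1 - \<beta>)))"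
      using sums_mult[OF geo, of "\<pi> 0"] by simp
    then have "\<pi> sums (\<pi> 0 * (1 / (1 - \<beta>)))" by (subst pe)
    then have "\<pi> 0 * (1 / (1 - \<beta>)) = 1" using s1 sums_unique2 by blast
    then have p0: "\<pi> 0 = 1 - \<beta>" using b1 by (simp add: field_simps)
    show "\<forall>i. \<pi> i = \<beta> ^ i - \<beta> ^ (i + 1)"
    proof
      fix i
      show "\<pi> i = \<beta> ^ i - \<beta> ^ (i + 1)"
        using pn[of i] p0 by (simp add: algebra_simps)
    qed
  next
    fix \<pi> :: "nat \<Rightarrow> real"
    assume h: "\<forall>i. \<pi> i = \<beta> ^ i - \<beta> ^ (i + 1)"
    have pe: "\<pi> = (\<lambda>i. (1 - \<beta>) * \<beta> ^ i)" using h by (auto simp: algebra_simps)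
    have nn: "\<forall>i. 0 \<le> \<pi> i" using pe b0 b1 by simp
    have s1: "\<pi> sums 1"
      using sums_mult[OF geo, of "1 - \<beta>"] pe b1 by simp
    have cols: "(\<lambda>i. \<pi> i * P i j) sums \<pi> j" for j
    proof (cases "j = 0")
      case True
      have "(\<lambda>i. 2/3 * \<pi> i + (if i = 0 \<or> i = 1 then \<pi> i / 6 else 0)) sums
            (2/3 * 1 + (\<Sum>i\<in>{0,1}. (if i = 0 \<or> i = 1 then \<pi> i / 6 else 0)))"
        by (intro sums_add sums_mult s1 sums_finite) auto
      moreover have "(\<lambda>i. 2/3 * \<pi> i + (if i = 0 \<or> i = 1 then \<pi> i / 6 else 0)) = (\<lambda>i. \<pi> i * P i 0)"
        by (auto simp: P_col0 algebra_simps)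
      moreover have "2/3 * 1 + (\<Sum>i\<in>{0,1}. (if i = 0 \<or> i = 1 then \<pi> i / 6 else (0::real))) = \<pi> 0"
      proof -
        have "2/3 * 1 + (\<Sum>i\<in>{0,1}. (if i = 0 \<or> i = 1 then \<pi> i / 6 else (0::real))) = 2/3 + ((1 - \<beta>) + (1 - \<beta>) * \<beta>) / 6"
          using pe by simp
        also have "\<dots> = 1 - \<beta>" using bq by (simp add: field_simps)
        finally show ?thesis using pe by simp
      qed
      ultimately show ?thesis using True by simp
    next
      case False
      then have "(\<lambda>i. \<pi> i * P i j) sums (\<pi> (j-1)/6 + \<pi> (j+1)/6)"
        using col_sums by simp
      moreover have "\<pi> (j-1)/6 + \<pi> (j+1)/6 = \<pi> j"
      proof -
        obtain k where k: "j = Suc k" using False not0_implies_Suc by blast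
        have "\<beta> ^ k + \<beta> ^ k * (\<beta> * \<beta>) = 6 * (\<beta> ^ k * \<beta>)"
        proof -
          have "\<beta> ^ k * (\<beta> * \<beta>) = \<beta> ^ k * (6 * \<beta> - 1)" using bq by simp
          then show ?thesis by (simp add: algebra_simps)
        qed
        then have H: "(1 - \<beta>) * (\<beta> ^ k) / 6 + (1 - \<beta>) * (\<beta> ^ k * \<beta> * \<beta>) / 6 = (1 - \<beta>) * (\<beta> ^ k * \<beta>)"
        proof -
          have "(1 - \<beta>) * (\<beta> ^ k) / 6 + (1 - \<beta>) * (\<beta> ^ k * \<beta> * \<beta>) / 6
              = (1 - \<beta>) * (\<beta> ^ k + \<beta> ^ k * (\<beta> * \<beta>)) / 6"
          proof -
            have "(1 - \<beta>) * (\<beta> ^ k) + (1 - \<beta>) * (\<beta> ^ k * \<beta> * \<beta>) = (1 - \<beta>) * (\<beta> ^ k + \<beta> ^ k * (\<beta> * \<beta>))"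
              by (simp add: algebra_simps)
            then show ?thesis by (simp add: add_divide_distrib[symmetric])
          qed
          also have "\<dots> = (1 - \<beta>) * (6 * (\<beta> ^ k * \<beta>)) / 6" using \<open>\<beta> ^ k + \<beta> ^ k * (\<beta> * \<beta>) = 6 * (\<beta> ^ k * \<beta>)\<close> by simp
          also have "\<dots> = (1 - \<beta>) * (\<beta> ^ k * \<beta>)" by simp
          finally show ?thesis .
        qed
        have a1: "\<pi> (j-1) = (1 - \<beta>) * (\<beta> ^ k)" using pe k by simp
        have a2: "\<pi> (j+1) = (1 - \<beta>) * (\<beta> ^ k * \<beta> * \<beta>)" using pe k by (simp add: algebra_simps)
        have a3: "\<pi> j = (1 - \<beta>) * (\<beta> ^ k * \<beta>)" using pe k by (simp add: algebra_simps)
        show ?thesis unfolding a1 a2 a3 using H .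
      qed
      ultimately show ?thesis by simp
    qed
    show "stationary_prob_vector P \<pi>"
      unfolding stationary_prob_vector_def using nn s1 cols by blast
  qed
qed

end
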